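(* Let $d\ge 2$, let $B$ be a ball of radius $r\in(0,\pi/2)$ in $\mathbb{S}^d$, and let $S_{\mathrm{reg}}$ be a regular simplex circumscribed about $B$. (i) For every $d\ge3$, if $r$ is sufficiently close to $\pi/2$, then there is a spherical simplex $S$ containing $B$ with $\mathrm{vol}_1(\mathrm{skel}_1(S))<\mathrm{vol}_1(\mathrm{skel}_1(S_{\mathrm{reg}}))$. (ii) For every $r\in(0,\pi/2)$, if $d$ is sufficiently large, then there is a spherical simplex $S$ containing $B$ with $\mathrm{vol}_1(\mathrm{skel}_1(S))<\mathrm{vol}_1(\mathrm{skel}_1(S_{\mathrm{reg}}))$.
   Context: A spherical simplex is the spherical convex hull of $d+1$ points in an open hemisphere of $\mathbb{S}^d$ not on a common great subsphere; it is regular if all its edges have equal length, and circumscribed about $B$ if it contains $B$ and all its facets touch $B$. $\mathrm{vol}_1(\mathrm{skel}_1(S))$ is the total edge length of $S$ (sum of the spherical lengths of its edges). *)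

theory Defs
  imports Complex_Main
begin

text \<open>Points of R^(d+1) are represented as functions nat => real supported on {0..d}.
  This explicit carrier is needed because the dimension d varies within the statement.\<close>

definition ipr :: "nat \<Rightarrow> (nat \<Rightarrow> real) \<Rightarrow> (nat \<Rightarrow> real) \<Rightarrow> real" where
  "ipr d x y = (\<Sum>i\<le>d. x i * y i)"

definition vecR :: "nat \<Rightarrow> (nat \<Rightarrow> real) set" where
  "vecR d = {x. \<forall>i>d. x i = 0}"

definition sph :: "nat \<Rightarrow> (nat \<Rightarrow> real) set" where
  "sph d = {x \<in> vecR d. ipr d x x = 1}"

definition sdist :: "nat \<Rightarrow> (nat \<Rightarrow> real) \<Rightarrow> (nat \<Rightarrow> real) \<Rightarrow> real" where
  "sdist d x y = arccos (ipr d x y)"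

definition sball :: "nat \<Rightarrow> (nat \<Rightarrow> real) \<Rightarrow> real \<Rightarrow> (nat \<Rightarrow> real) set" where
  "sball d c r = {x \<in> sph d. sdist d x c \<le> r}"

definition shull :: "nat \<Rightarrow> nat set \<Rightarrow> (nat \<Rightarrow> nat \<Rightarrow> real) \<Rightarrow> (nat \<Rightarrow> real) set" where
  "shull d I v = {x \<in> sph d. \<exists>l. (\<forall>i\<in>I. l i \<ge> 0) \<and> x = (\<lambda>k. \<Sum>i\<in>I. l i * v i k)}"

text \<open>v 0, ..., v d are the vertices of a spherical simplex in S^d: points of S^d in an
  open hemisphere, not on a common great subsphere (i.e. linearly independent in R^(d+1)).\<close>
definition is_ssimplex :: "nat \<Rightarrow> (nat \<Rightarrow> nat \<Rightarrow> real) \<Rightarrow> bool" where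
  "is_ssimplex d v \<longleftrightarrow>
     (\<forall>i\<le>d. v i \<in> sph d) \<and>
     (\<exists>u \<in> vecR d. \<forall>i\<le>d. ipr d u (v i) > 0) \<and>
     (\<forall>a. (\<forall>k\<le>d. (\<Sum>i\<le>d. a i * v i k) = 0) \<longrightarrow> (\<forall>i\<le>d. a i = 0))"

definition ssimplex_set :: "nat \<Rightarrow> (nat \<Rightarrow> nat \<Rightarrow> real) \<Rightarrow> (nat \<Rightarrow> real) set" where
  "ssimplex_set d v = shull d {..d} v"

definition sfacet :: "nat \<Rightarrow> (nat \<Rightarrow> nat \<Rightarrow> real) \<Rightarrow> nat \<Rightarrow> (nat \<Rightarrow> real) set" where
  "sfacet d v j = shull d ({..d} - {j}) v"

definition is_regular :: "nat \<Rightarrow> (nat \<Rightarrow> nat \<Rightarrow> real) \<Rightarrow> bool" where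
  "is_regular d v \<longleftrightarrow> (\<forall>i\<le>d. \<forall>j\<le>d. \<forall>k\<le>d. \<forall>l\<le>d.
      i \<noteq> j \<longrightarrow> k \<noteq> l \<longrightarrow> sdist d (v i) (v j) = sdist d (v k) (v l))"

definition circumscribed :: "nat \<Rightarrow> (nat \<Rightarrow> nat \<Rightarrow> real) \<Rightarrow> (nat \<Rightarrow> real) set \<Rightarrow> bool" where
  "circumscribed d v B \<longleftrightarrow> B \<subseteq> ssimplex_set d v \<and> (\<forall>j\<le>d. sfacet d v j \<inter> B \<noteq> {})"

definition edge_length :: "nat \<Rightarrow> (nat \<Rightarrow> nat \<Rightarrow> real) \<Rightarrow> real" where
  "edge_length d v = (\<Sum>j\<le>d. \<Sum>i<j. sdist d (v i) (v j))"

end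

theory Submission
  imports Defs
begin


lemma ipr_sym: "ipr d x y = ipr d y x" unfolding ipr_def by (simp add: mult.commute)

lemma ipr_lin: "ipr d (\<lambda>k. a * x k + b * y k) z = a * ipr d x z + b * ipr d y z"
  unfolding ipr_def by (simp add: algebra_simps sum.distrib sum_distrib_left)

lemma ipr_lin2: "ipr d z (\<lambda>k. a * x k + b * y k) = a * ipr d z x + b * ipr d z y"
  using ipr_lin[of d a x b y z] by (simp add: ipr_sym)

lemma ipr_sum: "ipr d (\<lambda>k. \<Sum>i\<in>I. f i * v i k) z = (\<Sum>i\<in>I. f i * ipr d (v i) z)"
  unfolding ipr_def by (simp add: sum_distrib_left sum_distrib_right mult.assoc sum.swap[of _ I])

lemma ipr_sum2: "ipr d z (\<lambda>k. \<Sum>i\<in>I. f i * v i k) = (\<Sum>i\<in>I. f i * ipr d z (v i))"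
  using ipr_sum[of d f v I z] by (simp add: ipr_sym)

lemma ipr_nonneg: "ipr d x x \<ge> 0" unfolding ipr_def by (simp add: sum_nonneg)

lemma ipr_zero: assumes "ipr d x x = 0" "k \<le> d" shows "x k = 0"
proof -
  have "\<forall>i\<in>{..d}. x i * x i = 0" using assms(1) unfolding ipr_def
    by (subst sum_nonneg_eq_0_iff[symmetric]) auto
  then show ?thesis using assms(2) by auto
qed

lemma unit_bound:
  assumes "ipr d x x = 1" "ipr d y y = 1"
  shows "-1 \<le> ipr d x y \<and> ipr d x y \<le> 1"
proof -
  have a: "ipr d (\<lambda>k. 1 * x k + 1 * y k) (\<lambda>k. 1 * x k + 1 * y k) \<ge> 0" by (rule ipr_nonneg)
  have b: "ipr d (\<lambda>k. 1 * x k + (-1) * y k) (\<lambda>k. 1 * x k + (-1) * y k) \<ge> 0" by (rule ipr_nonneg)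
  show ?thesis using a b assms unfolding ipr_lin ipr_lin2 by (simp add: ipr_sym[of d y x])
qed



lemma facet_bound:
  assumes cS: "c \<in> sph d" and mV: "m \<in> vecR d" and r0: "0 < r" and r1: "r < pi/2"
    and H: "\<And>x. x \<in> sball d c r \<Longrightarrow> ipr d m x \<ge> 0"
  shows "ipr d m c \<ge> sin r * sqrt (ipr d m m)"
proof -
  define a where "a = ipr d m c"
  define q where "q = ipr d m m - a^2"
  have cc: "ipr d c c = 1" and cV: "c \<in> vecR d" using cS unfolding sph_def by auto
  have "c \<in> sball d c r" using cS r0 unfolding sball_def sdist_def by (simp add: cc)
  then have a0: "a \<ge> 0" using H a_def by auto
  define p where "p = (\<lambda>k. 1 * m k + (-a) * c k)"
  have mc: "ipr d c m = a" using a_def ipr_sym by metis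
  have pm: "ipr d m p = q" unfolding p_def ipr_lin2 q_def a_def by (simp add: power2_eq_square)
  have pc: "ipr d c p = 0" unfolding p_def ipr_lin2 using mc cc by simp
  have pp: "ipr d p p = q" unfolding p_def ipr_lin ipr_lin2 using pm pc mc cc
    by (simp add: ipr_sym[of d c m] a_def q_def power2_eq_square algebra_simps)
  have q0: "q \<ge> 0" using pp ipr_nonneg by metis
  have sr: "0 \<le> sin r" "sin r \<le> 1" using r0 r1 by (auto intro: sin_ge_zero)
  have cr: "0 \<le> cos r" using r0 r1 by (auto intro: cos_ge_zero)
  have key: "(sin r)^2 * (q + a^2) \<le> a^2"
  proof (cases "q = 0")
    case True
    then show ?thesis using sr by (simp add: mult_left_le_one_le power_le_one)
  next
    case False
    then have qp: "q > 0" using q0 by auto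
    define x where "x = (\<lambda>k. cos r * c k + (- sin r / sqrt q) * p k)"
    have xx: "ipr d x x = 1" unfolding x_def ipr_lin ipr_lin2 using pp pc cc qp
      by (simp add: ipr_sym[of d p c] power2_eq_square[symmetric] sin_squared_eq)
    have xV: "x \<in> vecR d" using cV mV unfolding x_def p_def vecR_def by auto
    have xc: "ipr d x c = cos r" unfolding x_def ipr_lin using cc pc by (simp add: ipr_sym[of d p c])
    have "sdist d x c = r" unfolding sdist_def xc using r0 r1 by (simp add: arccos_cos)
    then have "x \<in> sball d c r" using xx xV unfolding sball_def sph_def by auto
    then have "ipr d m x \<ge> 0" using H by auto
    moreover have "ipr d m x = cos r * a - sin r * sqrt q"
    proof -
      have e: "q / sqrt q = sqrt q" using qp by (simp add: real_div_sqrt)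
      have "sin r * q / sqrt q = sin r * sqrt q" using e by (metis times_divide_eq_right)
      then show ?thesis unfolding x_def ipr_lin2 using pm qp by (simp add: a_def)
    qed
    ultimately have "sin r * sqrt q \<le> a * cos r" by (simp add: mult.commute)
    then have "(sin r * sqrt q)^2 \<le> (a * cos r)^2"
      using sr qp by (intro power_mono) auto
    then have "(sin r)^2 * q \<le> a^2 * (cos r)^2" using qp by (simp add: power_mult_distrib)
    then show ?thesis using cos_squared_eq[of r] by (simp add: algebra_simps)
  qed
  have "sin r * sqrt (ipr d m m) = sqrt ((sin r)^2 * (q + a^2))"
    using sr by (simp add: q_def real_sqrt_mult)
  also have "\<dots> \<le> sqrt (a^2)" using key by (rule real_sqrt_le_mono)
  also have "\<dots> = a" using a0 by simp
  finally show ?thesis using a_def by simp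
qed

lemma cs_unit:
  assumes "ipr d c c = 1" shows "(ipr d s c)^2 \<le> ipr d s s"
proof -
  define l where "l = ipr d s c"
  have "ipr d (\<lambda>k. 1 * s k + (-l) * c k) (\<lambda>k. 1 * s k + (-l) * c k) \<ge> 0" by (rule ipr_nonneg)
  then show ?thesis unfolding ipr_lin ipr_lin2 using assms
    by (simp add: ipr_sym[of d c s] l_def power2_eq_square algebra_simps)
qed



lemma sum_if_delta:
  fixes d j :: nat
  assumes "j \<le> d" shows "(\<Sum>i\<le>d. (if i = j then a else b)) = a + real d * (b::real)"
proof -
  have "(\<Sum>i\<le>d. (if i = j then a else b)) = (\<Sum>i\<le>d. b + (if i = j then a - b else 0))"
    by (rule sum.cong) auto
  also have "\<dots> = (real d + 1) * b + (a - b)" using assms by (simp add: sum.distrib)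
  finally show ?thesis by (simp add: algebra_simps)
qed

lemma sum_delta':
  fixes d j :: nat
  assumes "j \<le> d" shows "(\<Sum>i\<le>d. f i * (if i = j then a else 0)) = f j * (a::real)"
proof -
  have "(\<Sum>i\<le>d. f i * (if i = j then a else 0)) = (\<Sum>i\<le>d. (if i = j then f j * a else 0))"
    by (rule sum.cong) auto
  also have "\<dots> = f j * a" using assms by (subst sum.delta) auto
  finally show ?thesis .
qed

lemma shull_elim: "x \<in> shull d I v \<Longrightarrow> x \<in> sph d \<and> (\<exists>l. (\<forall>i\<in>I. l i \<ge> 0) \<and> x = (\<lambda>k. \<Sum>i\<in>I. l i * v i k))"
  by (simp add: shull_def)

lemma core1:
  fixes d :: nat and r :: real and c :: "nat \<Rightarrow> real" and v :: "nat \<Rightarrow> nat \<Rightarrow> real"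
  assumes d3: "d \<ge> 3" and r0: "0 < r" and r1: "r < pi/2" and big: "(real d + 1) * (sin r)^2 > 1"
    and cS: "c \<in> sph d" and vs: "is_ssimplex d v" and vr: "is_regular d v"
    and sub: "sball d c r \<subseteq> ssimplex_set d v"
  shows "\<exists>t. t < 0 \<and> 1 + real d * t > 0 \<and> (\<forall>i\<le>d. \<forall>j\<le>d. ipr d (v i) (v j) = (if i = j then 1 else t))"
proof -
  have vu: "\<And>i. i \<le> d \<Longrightarrow> ipr d (v i) (v i) = 1" and vV: "\<And>i. i \<le> d \<Longrightarrow> v i \<in> vecR d"
    using vs unfolding is_ssimplex_def sph_def by auto
  have ind: "\<And>a. (\<forall>k\<le>d. (\<Sum>i\<le>d. a i * v i k) = 0) \<Longrightarrow> (\<forall>i\<le>d. a i = 0)"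
    using vs unfolding is_ssimplex_def by blast
  have cc: "ipr d c c = 1" and cV: "c \<in> vecR d" using cS unfolding sph_def by auto
  define t where "t = ipr d (v 0) (v 1)"
  have G: "ipr d (v i) (v j) = (if i = j then 1 else t)" if "i \<le> d" "j \<le> d" for i j
  proof (cases "i = j")
    case True then show ?thesis using vu that by simp
  next
    case False
    have R: "\<forall>i\<le>d. \<forall>j\<le>d. \<forall>k\<le>d. \<forall>l\<le>d.
      i \<noteq> j \<longrightarrow> k \<noteq> l \<longrightarrow> sdist d (v i) (v j) = sdist d (v k) (v l)"
      using vr unfolding is_regular_def by blast
    have "sdist d (v i) (v j) = sdist d (v 0) (v 1)"
      using R[rule_format, of i j 0 1] False that d3 by simp
    moreover have "\<bar>ipr d (v i) (v j)\<bar> \<le> 1" using unit_bound[OF vu vu, of i j] that by auto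
    moreover have "\<bar>ipr d (v 0) (v 1)\<bar> \<le> 1" using unit_bound[OF vu vu, of 0 1] d3 by auto
    ultimately have "ipr d (v i) (v j) = t" unfolding sdist_def t_def using arccos_eq_iff by blast
    then show ?thesis using False by simp
  qed
  define s where "s = (\<lambda>k. \<Sum>i\<le>d. 1 * v i k)"
  have sv: "ipr d s (v j) = 1 + real d * t" if "j \<le> d" for j
  proof -
    have "ipr d s (v j) = (\<Sum>i\<le>d. 1 * ipr d (v i) (v j))" unfolding s_def by (rule ipr_sum)
    also have "\<dots> = (\<Sum>i\<le>d. (if i = j then 1 else t))" by (rule sum.cong) (auto simp: G that)
    finally show ?thesis using sum_if_delta[OF that] by simp
  qed
  have ss: "ipr d s s = (real d + 1) * (1 + real d * t)"
  proof -
    have "ipr d s s = (\<Sum>i\<le>d. 1 * ipr d s (v i))" unfolding s_def[of] by (rule ipr_sum2)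
    also have "\<dots> = (\<Sum>i\<le>d. 1 + real d * t)" by (rule sum.cong) (auto simp: sv)
    finally show ?thesis by simp
  qed
  have pos: "1 + real d * t > 0"
  proof (rule ccontr)
    assume "\<not> ?thesis"
    then have "ipr d s s \<le> 0" using ss by (simp add: mult_nonneg_nonpos)
    then have "ipr d s s = 0" using ipr_nonneg[of d s] by linarith
    then have "\<forall>k\<le>d. s k = 0" using ipr_zero by blast
    then have "\<forall>i\<le>d. (1::real) = 0" using ind[of "\<lambda>_. 1"] unfolding s_def by blast
    then show False by auto
  qed
  have t1: "t < 1"
  proof (rule ccontr)
    assume "\<not> ?thesis"
    define x where "x = (\<lambda>k. 1 * v 0 k + (-1) * v 1 k)"
    have "ipr d x x = 2 - 2 * t" unfolding x_def ipr_lin ipr_lin2 using G d3 by (simp add: ipr_sym[of d "v 1" "v 0"])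
    then have "ipr d x x = 0" using ipr_nonneg[of d x] \<open>\<not> t < 1\<close> by linarith
    then have x0: "\<forall>k\<le>d. x k = 0" using ipr_zero by blast
    define a where "a = (\<lambda>i::nat. if i = 0 then (1::real) else if i = 1 then -1 else 0)"
    have "\<forall>k\<le>d. (\<Sum>i\<le>d. a i * v i k) = 0"
    proof (intro allI impI)
      fix k assume "k \<le> d"
      have "(\<Sum>i\<le>d. a i * v i k) = (\<Sum>i\<le>d. (if i = 0 then v 0 k else 0) + (if i = 1 then - v 1 k else 0))"
        by (rule sum.cong) (auto simp: a_def)
      also have "\<dots> = x k" using d3 by (simp add: sum.distrib x_def)
      finally show "(\<Sum>i\<le>d. a i * v i k) = 0" using x0 \<open>k \<le> d\<close> by simp
    qed
    then have "a 0 = 0" using ind by blast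
    then show False by (simp add: a_def)
  qed
  define \<kappa> where "\<kappa> = (1 + real d * t) * (1 - t)"
  have kp: "\<kappa> > 0" using pos t1 by (simp add: \<kappa>_def)
  define n where "n = (\<lambda>j k. (1 + real d * t) * v j k + (- t) * s k)"
  have nv: "ipr d (n j) (v i) = (if i = j then \<kappa> else 0)" if "i \<le> d" "j \<le> d" for i j
    unfolding n_def ipr_lin using that G[of j i] sv[of i] by (auto simp: \<kappa>_def algebra_simps)
  have hull: "ipr d (n j) x \<ge> 0" if "x \<in> ssimplex_set d v" "j \<le> d" for x j
  proof -
    have E: "\<exists>l. (\<forall>i\<in>{..d}. l i \<ge> 0) \<and> x = (\<lambda>k. \<Sum>i\<le>d. l i * v i k)"
      using shull_elim[of x d "{..d}" v] that(1) unfolding ssimplex_set_def by simp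
    then obtain l where l: "\<forall>i\<in>{..d}. l i \<ge> 0" "x = (\<lambda>k. \<Sum>i\<le>d. l i * v i k)"
      by (elim exE conjE)
    have "ipr d (n j) x = (\<Sum>i\<le>d. l i * ipr d (n j) (v i))" unfolding l(2) by (rule ipr_sum2)
    also have "\<dots> = (\<Sum>i\<le>d. l i * (if i = j then \<kappa> else 0))" by (rule sum.cong) (auto simp: nv that)
    also have "\<dots> = l j * \<kappa>" by (rule sum_delta'[OF that(2)])
    finally show ?thesis using l(1) that(2) kp by simp
  qed
  have ns: "ipr d (n j) s = \<kappa>" if "j \<le> d" for j
  proof -
    have "ipr d (n j) s = (\<Sum>i\<le>d. 1 * ipr d (n j) (v i))" unfolding s_def by (rule ipr_sum2)
    also have "\<dots> = (\<Sum>i\<le>d. 1 * (if i = j then \<kappa> else 0))" by (rule sum.cong) (auto simp: nv that)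
    also have "\<dots> = 1 * \<kappa>" by (rule sum_delta'[OF that])
    finally show ?thesis by simp
  qed
  have nn: "ipr d (n j) (n j) = (1 + (real d - 1) * t) * \<kappa>" if "j \<le> d" for j
  proof -
    have "ipr d (n j) (n j) = (1 + real d * t) * ipr d (n j) (v j) + (- t) * ipr d (n j) s"
      by (subst (2) n_def) (rule ipr_lin2)
    then show ?thesis using nv[OF that that] ns[OF that] by (simp add: algebra_simps)
  qed
  have sumn: "(\<Sum>j\<le>d. ipr d (n j) c) = (1 - t) * ipr d s c"
  proof -
    have "(\<Sum>j\<le>d. ipr d (n j) c) = (\<Sum>j\<le>d. (1 + real d * t) * ipr d (v j) c + (- t) * ipr d s c)"
      unfolding n_def ipr_lin by simp
    also have "\<dots> = (1 + real d * t) * (\<Sum>j\<le>d. 1 * ipr d (v j) c) - (real d + 1) * t * ipr d s c"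
      by (simp add: sum_subtractf sum_distrib_left)
    also have "(\<Sum>j\<le>d. 1 * ipr d (v j) c) = ipr d s c" unfolding s_def by (rule ipr_sum[symmetric])
    finally show ?thesis by (simp add: algebra_simps)
  qed
  have tneg: "t < 0"
  proof (rule ccontr)
    assume "\<not> t < 0"
    then have t0: "t \<ge> 0" by simp
    define N where "N = (1 + (real d - 1) * t) * \<kappa>"
    have N0: "N \<ge> 0" using t0 kp d3 unfolding N_def by (intro mult_nonneg_nonneg) auto
    have fb: "ipr d (n j) c \<ge> sin r * sqrt N" if "j \<le> d" for j
    proof -
      have vz: "\<And>i k. i \<le> d \<Longrightarrow> d < k \<Longrightarrow> v i k = 0" using vV unfolding vecR_def by auto
      have "n j \<in> vecR d" unfolding n_def s_def vecR_def using vz that by simp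
      then have "ipr d (n j) c \<ge> sin r * sqrt (ipr d (n j) (n j))"
        using facet_bound[OF cS _ r0 r1] hull[OF _ that] sub by blast
      then show ?thesis using nn[OF that] N_def by simp
    qed
    have "(\<Sum>j\<le>d. sin r * sqrt N) \<le> (\<Sum>j\<le>d. ipr d (n j) c)" by (rule sum_mono) (simp add: fb)
    then have A: "(real d + 1) * (sin r * sqrt N) \<le> (1 - t) * ipr d s c" using sumn by (simp add: add.commute)
    have sr: "sin r \<ge> 0" using r0 r1 by (auto intro: sin_ge_zero)
    have "((real d + 1) * (sin r * sqrt N))^2 \<le> ((1 - t) * ipr d s c)^2"
      using A sr N0 by (intro power_mono) auto
    also have "\<dots> = (1 - t)^2 * (ipr d s c)^2" by (simp add: power_mult_distrib)
    also have "\<dots> \<le> (1 - t)^2 * ipr d s s" using cs_unit[OF cc] by (intro mult_left_mono) auto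
    finally have B: "(real d + 1)^2 * (sin r)^2 * N \<le> (1 - t)^2 * ((real d + 1) * (1 + real d * t))"
      using N0 ss by (simp add: power_mult_distrib)
    have "(real d + 1)^2 * (sin r)^2 * N = ((real d + 1) * (sin r)^2 * (1 + (real d - 1) * t)) * ((real d + 1) * (1 + real d * t) * (1 - t))"
      unfolding N_def \<kappa>_def by (simp add: power2_eq_square algebra_simps)
    moreover have "(1 - t)^2 * ((real d + 1) * (1 + real d * t)) = (1 - t) * ((real d + 1) * (1 + real d * t) * (1 - t))"
      by (simp add: power2_eq_square algebra_simps)
    moreover have P: "(real d + 1) * (1 + real d * t) * (1 - t) > 0" using pos t1 by simp
    ultimately have "(real d + 1) * (sin r)^2 * (1 + (real d - 1) * t) \<le> 1 - t"
      using B by (metis mult_le_cancel_right_pos)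
    moreover have "(real d + 1) * (sin r)^2 * (1 + (real d - 1) * t) \<ge> (real d + 1) * (sin r)^2"
    proof -
      have "1 \<le> 1 + (real d - 1) * t" using t0 d3 by simp
      then show ?thesis by (metis mult.right_neutral mult_left_mono zero_le_power2 mult_nonneg_nonneg of_nat_0_le_iff add_nonneg_nonneg zero_le_one)
    qed
    ultimately show False using big t0 by linarith
  qed
  show ?thesis using tneg pos G by blast
qed



lemma gauss2: "2 * (\<Sum>j\<le>d. real j) = real d * (real d + 1)"
  by (induct d) (simp_all add: algebra_simps)

lemma wsum:
  fixes v :: "nat \<Rightarrow> nat \<Rightarrow> real" and d :: nat
  assumes w: "w = (\<lambda>i k. if i = 0 then v 0 k else (1/N) * v i k + (-\<alpha>/N) * v 0 k)"
  shows "(\<Sum>i\<le>d. a i * w i k) =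
    (\<Sum>i\<le>d. (if i = 0 then a 0 - (\<alpha>/N) * (\<Sum>j\<le>d. if j = 0 then 0 else a j) else a i / N) * v i k)"
proof -
  have "(\<Sum>i\<le>d. a i * w i k) = (\<Sum>i\<le>d. (if i = 0 then a 0 else a i / N) * v i k
      + (if i = 0 then 0 else a i) * ((-\<alpha>/N) * v 0 k))"
    by (rule sum.cong) (auto simp: w algebra_simps)
  also have "\<dots> = (\<Sum>i\<le>d. (if i = 0 then a 0 else a i / N) * v i k)
      + (\<Sum>j\<le>d. if j = 0 then 0 else a j) * ((-\<alpha>/N) * v 0 k)"
    by (simp only: sum.distrib sum_distrib_right)
  also have "\<dots> = (\<Sum>i\<le>d. (if i = 0 then a 0 else a i / N) * v i k
      + (if i = 0 then - (\<alpha>/N) * (\<Sum>j\<le>d. if j = 0 then 0 else a j) * v 0 k else 0))"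
    by (simp only: sum.distrib sum.delta[OF finite_atMost] atMost_iff zero_le if_True) (simp add: algebra_simps)
  also have "\<dots> = (\<Sum>i\<le>d. (if i = 0 then a 0 - (\<alpha>/N) * (\<Sum>j\<le>d. if j = 0 then 0 else a j) else a i / N) * v i k)"
    by (rule sum.cong) (auto simp: algebra_simps)
  finally show ?thesis .
qed



lemma core2:
  fixes d :: nat and v :: "nat \<Rightarrow> nat \<Rightarrow> real" and t :: real and B :: "(nat \<Rightarrow> real) set"
  assumes d3: "d \<ge> 3" and tneg: "t < 0" and pos: "1 + real d * t > 0"
    and G: "\<forall>i\<le>d. \<forall>j\<le>d. ipr d (v i) (v j) = (if i = j then 1 else t)"
    and vs: "is_ssimplex d v" and sub: "B \<subseteq> ssimplex_set d v"
  shows "\<exists>w. is_ssimplex d w \<and> B \<subseteq> ssimplex_set d w \<and> edge_length d w < edge_length d v"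
proof -
  have vV: "\<And>i. i \<le> d \<Longrightarrow> v i \<in> vecR d"
    using vs unfolding is_ssimplex_def sph_def by auto
  have vz: "\<And>i k. i \<le> d \<Longrightarrow> d < k \<Longrightarrow> v i k = 0" using vV unfolding vecR_def by auto
  have ind: "\<And>a. (\<forall>k\<le>d. (\<Sum>i\<le>d. a i * v i k) = 0) \<Longrightarrow> (\<forall>i\<le>d. a i = 0)"
    using vs unfolding is_ssimplex_def by blast
  have tm1: "t > -1"
  proof -
    have "real d * t > -1" using pos by linarith
    moreover have "real d * t \<le> t" using tneg d3 by (simp add: mult_le_cancel_right1)
    ultimately show ?thesis by linarith
  qed
  define A where "A = arccos t"
  have Ag: "A > pi/2" unfolding A_def using arccos_less_arccos[of t 0] tm1 tneg by simp
  define M where "M = (real d + 1) * A / 2 - pi"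
  have Mp: "M > 0"
  proof -
    have "A > 0" using Ag pi_gt_zero by linarith
    then have "(real d + 1) * A \<ge> 4 * A" using d3 by (intro mult_right_mono) auto
    then have "(real d + 1) * A > 4 * (pi/2)" using Ag by linarith
    then show ?thesis unfolding M_def by simp
  qed
  have ev: "edge_length d v = real d * pi + real d * M"
  proof -
    have "edge_length d v = (\<Sum>j\<le>d. \<Sum>i<j. A)"
      unfolding edge_length_def sdist_def A_def by (intro sum.cong refl) (auto simp: G)
    also have "\<dots> = (\<Sum>j\<le>d. real j) * A" by (simp add: sum_distrib_right)
    also have "\<dots> = real d * (real d + 1) / 2 * A" using gauss2[of d] by simp
    finally show ?thesis unfolding M_def by (simp add: algebra_simps)
  qed
  define \<epsilon> where "\<epsilon> = min (M / (2 * real d)) (pi/2)"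
  have ep: "\<epsilon> > 0" "\<epsilon> \<le> pi/2" "\<epsilon> \<le> M / (2 * real d)" using Mp d3 by (auto simp: \<epsilon>_def)
  have ce: "cos \<epsilon> < 1"
  proof -
    have "cos \<epsilon> < cos 0" using ep by (intro cos_monotone_0_pi) auto
    then show ?thesis by simp
  qed
  have ce0: "cos \<epsilon> \<ge> 0" using ep by (intro cos_ge_zero) auto
  define \<alpha> where "\<alpha> = 2 / (1 - cos \<epsilon>) + 1"
  have a1: "\<alpha> \<ge> 1" unfolding \<alpha>_def using ce by simp
  have a2: "(1 - cos \<epsilon>) * \<alpha> \<ge> 2"
  proof -
    have "(1 - cos \<epsilon>) * \<alpha> = 2 + (1 - cos \<epsilon>)" unfolding \<alpha>_def using ce by (simp add: field_simps)
    then show ?thesis using ce by simp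
  qed
  define N2 where "N2 = 1 - 2 * \<alpha> * t + \<alpha>^2"
  have N2g: "N2 \<ge> 1 + \<alpha>^2" unfolding N2_def using a1 tneg mult_nonneg_nonpos[of \<alpha> t] by simp
  define N where "N = sqrt N2"
  have N2p: "N2 > 0" using N2g by (smt (verit) zero_le_power2)
  have Np: "N > 0" and NN: "N * N = N2" using N2p unfolding N_def by auto
  define w where "w = (\<lambda>i k. if i = 0 then v 0 k else (1/N) * v i k + (-\<alpha>/N) * v 0 k)"
  have wV: "w i \<in> vecR d" if "i \<le> d" for i
    using vz that unfolding w_def vecR_def by auto
  have Gi: "\<And>i j. i \<le> d \<Longrightarrow> j \<le> d \<Longrightarrow> ipr d (v i) (v j) = (if i = j then 1 else t)" using G by blast
  have w0: "w 0 = v 0" unfolding w_def by simp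
  have wi: "w i = (\<lambda>k. (1/N) * v i k + (-\<alpha>/N) * v 0 k)" if "i \<noteq> 0" for i
    unfolding w_def using that by auto
  have wiv: "ipr d (w i) (v j) = (1/N) * ipr d (v i) (v j) + (-\<alpha>/N) * ipr d (v 0) (v j)"
    if "i \<noteq> 0" for i j unfolding wi[OF that] by (rule ipr_lin)
  have ww: "ipr d (w i) (w j) = (if i = j then 1 else 1 - (1 - t) / N2)"
    if "i \<noteq> 0" "j \<noteq> 0" "i \<le> d" "j \<le> d" for i j
  proof -
    have "ipr d (w i) (w j) = (1/N) * ipr d (w i) (v j) + (-\<alpha>/N) * ipr d (w i) (v 0)"
      unfolding wi[OF that(2)] by (rule ipr_lin2)
    also have "\<dots> = (1/N) * ((1/N) * (if i = j then 1 else t) + (-\<alpha>/N) * t)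
        + (-\<alpha>/N) * ((1/N) * t + (-\<alpha>/N) * 1)"
      using that by (simp add: wiv Gi)
    also have "\<dots> = ((if i = j then 1 else t) - 2 * \<alpha> * t + \<alpha>^2) / (N * N)"
      using Np by (simp add: field_simps power2_eq_square)
    also have "\<dots> = (if i = j then 1 else 1 - (1 - t) / N2)"
      using N2p unfolding NN by (cases "i = j") (auto simp: N2_def field_simps)
    finally show ?thesis .
  qed
  have wu: "ipr d (w i) (w i) = 1" if "i \<le> d" for i
  proof (cases "i = 0")
    case True then show ?thesis using Gi[of 0 0] by (simp add: w0)
  next
    case False then show ?thesis using ww[of i i] that by simp
  qed
  have small: "arccos (ipr d (w i) (w j)) \<le> \<epsilon>" if "i \<noteq> 0" "j \<noteq> 0" "i \<noteq> j" "i \<le> d" "j \<le> d" for i j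
  proof -
    have y: "ipr d (w i) (w j) = 1 - (1 - t) / N2" using ww that by simp
    have "(1 - t) \<le> (1 - cos \<epsilon>) * N2"
    proof -
      have "(1 - cos \<epsilon>) * N2 \<ge> (1 - cos \<epsilon>) * \<alpha>^2" using N2g ce by (intro mult_left_mono) auto
      moreover have "(1 - cos \<epsilon>) * \<alpha>^2 = ((1 - cos \<epsilon>) * \<alpha>) * \<alpha>" by (simp add: power2_eq_square)
      moreover have "((1 - cos \<epsilon>) * \<alpha>) * \<alpha> \<ge> 2 * 1" using a1 a2 by (intro mult_mono) auto
      ultimately show ?thesis using tm1 by linarith
    qed
    then have "(1 - t) / N2 \<le> 1 - cos \<epsilon>" using N2p by (simp add: divide_le_eq)
    then have c1: "cos \<epsilon> \<le> ipr d (w i) (w j)" using y by simp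
    have c2: "ipr d (w i) (w j) \<le> 1" using y N2p tm1 tneg by simp
    have "arccos (ipr d (w i) (w j)) \<le> arccos (cos \<epsilon>)"
      using c1 c2 ce0 by (intro arccos_le_arccos) auto
    also have "\<dots> = \<epsilon>" using ep by (intro arccos_cos) auto
    finally show ?thesis .
  qed
  have big: "arccos (ipr d (w i) (w j)) \<le> pi" if "i \<le> d" "j \<le> d" for i j
    using unit_bound[OF wu[OF that(1)] wu[OF that(2)]] by (intro arccos_ubound) auto
  have ew: "edge_length d w \<le> real d * pi + real d * (M / 2)"
  proof -
    have inner: "(\<Sum>i<j. sdist d (w i) (w j)) \<le> (if j = 0 then 0 else pi + real d * \<epsilon>)" if "j \<le> d" for j
    proof (cases "j = 0")
      case True then show ?thesis by simp
    next
      case False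
      have "(\<Sum>i<j. sdist d (w i) (w j)) \<le> (\<Sum>i<j. (if i = 0 then pi else 0) + \<epsilon>)"
      proof (rule sum_mono)
        fix i assume "i \<in> {..<j}"
        then have "i < j" by simp
        then show "sdist d (w i) (w j) \<le> (if i = 0 then pi else 0) + \<epsilon>"
          using small[of i j] big[of i j] that ep False unfolding sdist_def
          by (cases "i = 0") auto
      qed
      also have "\<dots> = pi + real j * \<epsilon>" using False by (simp add: sum.distrib)
      also have "\<dots> \<le> pi + real d * \<epsilon>" using that ep by (simp add: mult_right_mono)
      finally show ?thesis using False by simp
    qed
    have "edge_length d w \<le> (\<Sum>j\<le>d. (if j = 0 then 0 else pi + real d * \<epsilon>))"
      unfolding edge_length_def by (rule sum_mono) (simp add: inner)
    also have "\<dots> = real d * (pi + real d * \<epsilon>)" using sum_if_delta[of 0 d 0 "pi + real d * \<epsilon>"] by simp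
    also have "\<dots> \<le> real d * (pi + real d * (M / (2 * real d)))"
      using ep by (intro mult_left_mono add_left_mono) auto
    also have "\<dots> = real d * pi + real d * (M / 2)" using d3 by (simp add: field_simps)
    finally show ?thesis .
  qed
  have "real d * M > 0" using Mp d3 by simp
  then have less: "edge_length d w < edge_length d v" using ew ev by linarith
  have ws: "\<And>a k. (\<Sum>i\<le>d. a i * w i k) =
    (\<Sum>i\<le>d. (if i = 0 then a 0 - (\<alpha>/N) * (\<Sum>j\<le>d. if j = 0 then 0 else a j) else a i / N) * v i k)"
    by (rule wsum[OF w_def])
  have wind: "\<forall>a. (\<forall>k\<le>d. (\<Sum>i\<le>d. a i * w i k) = 0) \<longrightarrow> (\<forall>i\<le>d. a i = 0)"
  proof (rule allI, rule impI)
    fix a assume H: "\<forall>k\<le>d. (\<Sum>i\<le>d. a i * w i k) = 0"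
    define b where "b = (\<lambda>i. if i = 0 then a 0 - (\<alpha>/N) * (\<Sum>j\<le>d. if j = 0 then 0 else a j) else a i / N)"
    have "\<forall>i\<le>d. b i = 0" using H ws ind[of b] unfolding b_def by simp
    then have ai: "\<forall>i\<le>d. i \<noteq> 0 \<longrightarrow> a i = 0" using Np unfolding b_def by auto
    then have "(\<Sum>j\<le>d. if j = 0 then 0 else a j) = 0" by (intro sum.neutral) auto
    then have "a 0 = 0" using \<open>\<forall>i\<le>d. b i = 0\<close> unfolding b_def by auto
    then show "\<forall>i\<le>d. a i = 0" using ai by auto
  qed
  define s where "s = (\<lambda>k. \<Sum>i\<le>d. 1 * v i k)"
  have sv: "ipr d s (v j) = 1 + real d * t" if "j \<le> d" for j
  proof -
    have "ipr d s (v j) = (\<Sum>i\<le>d. 1 * ipr d (v i) (v j))" unfolding s_def by (rule ipr_sum)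
    also have "\<dots> = (\<Sum>i\<le>d. (if i = j then 1 else t))" by (rule sum.cong) (auto simp: Gi that)
    finally show ?thesis using sum_if_delta[OF that] by simp
  qed
  define b where "b = (1 + 1/\<alpha>) / (1 + real d * t)"
  define u where "u = (\<lambda>k. (-1) * v 0 k + b * s k)"
  have uV: "u \<in> vecR d" using vz unfolding u_def s_def vecR_def by simp
  have uv: "ipr d u (v j) = (if j = 0 then 1/\<alpha> else 1/\<alpha> + 1 - t)" if "j \<le> d" for j
  proof -
    have "ipr d u (v j) = (-1) * ipr d (v 0) (v j) + b * ipr d s (v j)" unfolding u_def by (rule ipr_lin)
    also have "\<dots> = (-1) * (if j = 0 then 1 else t) + (1 + 1/\<alpha>)"
      using that pos Gi[of 0 j] sv[OF that] unfolding b_def by simp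
    finally show ?thesis by auto
  qed
  have hemi: "\<forall>i\<le>d. ipr d u (w i) > 0"
  proof (intro allI impI)
    fix i assume i: "i \<le> d"
    show "ipr d u (w i) > 0"
    proof (cases "i = 0")
      case True then show ?thesis using uv[of 0] a1 by (simp add: w0)
    next
      case False
      have "ipr d u (w i) = (1/N) * ipr d u (v i) + (-\<alpha>/N) * ipr d u (v 0)"
        unfolding wi[OF False] by (rule ipr_lin2)
      also have "\<dots> = (1/\<alpha> - t) / N"
      proof -
        have e1: "ipr d u (v i) = 1/\<alpha> + 1 - t" using uv[OF i] False by simp
        have e0: "ipr d u (v 0) = 1/\<alpha>" using uv[of 0] by simp
        show ?thesis unfolding e1 e0 using Np a1 by (simp add: field_simps)
      qed
      moreover have "1/\<alpha> > 0" using a1 by simp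
      then have "1/\<alpha> - t > 0" using tneg by linarith
      then have "(1/\<alpha> - t) / N > 0" using Np by (rule divide_pos_pos)
      ultimately show ?thesis by simp
    qed
  qed
  have wsimp: "is_ssimplex d w"
    unfolding is_ssimplex_def sph_def using wV wu uV hemi wind by blast
  have wsub: "B \<subseteq> ssimplex_set d w"
  proof
    fix x assume "x \<in> B"
    then have xh: "x \<in> shull d {..d} v" using sub unfolding ssimplex_set_def by auto
    then have xS: "x \<in> sph d" unfolding shull_def by simp
    have E: "\<exists>l. (\<forall>i\<in>{..d}. l i \<ge> 0) \<and> x = (\<lambda>k. \<Sum>i\<le>d. l i * v i k)"
      using shull_elim[OF xh] by simp
    then obtain l where l: "\<forall>i\<in>{..d}. l i \<ge> 0" "x = (\<lambda>k. \<Sum>i\<le>d. l i * v i k)"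
      by (elim exE conjE)
    define L where "L = (\<Sum>j\<le>d. if j = 0 then 0 else l j)"
    define l' where "l' = (\<lambda>i. if i = 0 then l 0 + \<alpha> * L else N * l i)"
    have L0: "L \<ge> 0" unfolding L_def using l(1) by (intro sum_nonneg) auto
    have l'0: "\<forall>i\<in>{..d}. l' i \<ge> 0" using l(1) L0 a1 Np unfolding l'_def by auto
    have Ls: "(\<Sum>j\<le>d. if j = 0 then 0 else l' j) = N * L"
      unfolding L_def l'_def sum_distrib_left by (intro sum.cong) auto
    have "x = (\<lambda>k. \<Sum>i\<le>d. l' i * w i k)"
    proof
      fix k
      have "(\<Sum>i\<le>d. l' i * w i k) = (\<Sum>i\<le>d. (if i = 0 then l' 0 - (\<alpha>/N) * (\<Sum>j\<le>d. if j = 0 then 0 else l' j) else l' i / N) * v i k)"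
        by (rule ws)
      also have "\<dots> = (\<Sum>i\<le>d. l i * v i k)"
        using Np by (intro sum.cong refl) (auto simp: Ls l'_def)
      finally show "x k = (\<Sum>i\<le>d. l' i * w i k)" using l(2) by simp
    qed
    then show "x \<in> ssimplex_set d w" unfolding ssimplex_set_def shull_def using xS l'0 by blast
  qed
  show ?thesis using wsimp wsub less by blast
qed



lemma core:
  fixes d :: nat and r :: real
  assumes d3: "d \<ge> 3" and r0: "0 < r" and r1: "r < pi/2" and big: "(real d + 1) * (sin r)^2 > 1"
  shows "\<forall>c \<in> sph d. \<forall>vreg. is_ssimplex d vreg \<and> is_regular d vreg \<and> circumscribed d vreg (sball d c r)
         \<longrightarrow> (\<exists>v. is_ssimplex d v \<and> sball d c r \<subseteq> ssimplex_set d v \<and>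
                  edge_length d v < edge_length d vreg)"
proof (intro ballI allI impI)
  fix c vreg assume c: "c \<in> sph d"
    and H: "is_ssimplex d vreg \<and> is_regular d vreg \<and> circumscribed d vreg (sball d c r)"
  have sub: "sball d c r \<subseteq> ssimplex_set d vreg" using H unfolding circumscribed_def by blast
  obtain t where t: "t < 0" "1 + real d * t > 0" "\<forall>i\<le>d. \<forall>j\<le>d. ipr d (vreg i) (vreg j) = (if i = j then 1 else t)"
    using core1[OF d3 r0 r1 big c _ _ sub] H by blast
  show "\<exists>v. is_ssimplex d v \<and> sball d c r \<subseteq> ssimplex_set d v \<and> edge_length d v < edge_length d vreg"
    using core2[OF d3 t(1) t(2) t(3) _ sub] H by blast
qed

theorem mainTheorem11:
  shows
  "(\<forall>d\<ge>3. \<exists>r0<pi/2. \<forall>r. r0 < r \<and> 0 < r \<and> r < pi/2 \<longrightarrow>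
      (\<forall>c \<in> sph d. \<forall>vreg. is_ssimplex d vreg \<and> is_regular d vreg \<and> circumscribed d vreg (sball d c r)
         \<longrightarrow> (\<exists>v. is_ssimplex d v \<and> sball d c r \<subseteq> ssimplex_set d v \<and>
                  edge_length d v < edge_length d vreg)))
   \<and>
   (\<forall>r. 0 < r \<and> r < pi/2 \<longrightarrow> (\<exists>D. \<forall>d\<ge>max 2 D.
      (\<forall>c \<in> sph d. \<forall>vreg. is_ssimplex d vreg \<and> is_regular d vreg \<and> circumscribed d vreg (sball d c r)
         \<longrightarrow> (\<exists>v. is_ssimplex d v \<and> sball d c r \<subseteq> ssimplex_set d v \<and>
                  edge_length d v < edge_length d vreg))))"
proof (intro conjI allI impI)
  fix d :: nat assume d3: "d \<ge> 3"
  show "\<exists>r0<pi/2. \<forall>r. r0 < r \<and> 0 < r \<and> r < pi/2 \<longrightarrow>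
      (\<forall>c \<in> sph d. \<forall>vreg. is_ssimplex d vreg \<and> is_regular d vreg \<and> circumscribed d vreg (sball d c r)
         \<longrightarrow> (\<exists>v. is_ssimplex d v \<and> sball d c r \<subseteq> ssimplex_set d v \<and>
                  edge_length d v < edge_length d vreg))"
  proof (intro exI[of _ "pi/6"] conjI allI impI)
    show "pi/6 < pi/2" by simp
    fix r assume r: "pi/6 < r \<and> 0 < r \<and> r < pi/2"
    have "sin (pi/6) < sin r" using r by (intro sin_monotone_2pi) auto
    then have s: "sin r > 1/2" by (simp add: sin_30)
    then have "(sin r)^2 > (1/2)^2" by (intro power_strict_mono) auto
    moreover have "real d + 1 \<ge> 4" using d3 by simp
    ultimately have "(real d + 1) * (sin r)^2 > 4 * (1/2)^2"
      by (intro mult_le_less_imp_less) auto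
    moreover have "4 * (1/2::real)^2 = 1" by (simp add: power2_eq_square)
    ultimately have big: "(real d + 1) * (sin r)^2 > 1" by linarith
    show "\<forall>c \<in> sph d. \<forall>vreg. is_ssimplex d vreg \<and> is_regular d vreg \<and> circumscribed d vreg (sball d c r)
         \<longrightarrow> (\<exists>v. is_ssimplex d v \<and> sball d c r \<subseteq> ssimplex_set d v \<and>
                  edge_length d v < edge_length d vreg)"
      using core[OF d3 _ _ big] r by blast
  qed
next
  fix r :: real assume r: "0 < r \<and> r < pi/2"
  have sp: "sin r > 0" using r by (intro sin_gt_zero) auto
  define D where "D = nat \<lceil>1 / (sin r)^2\<rceil> + 3"
  show "\<exists>D. \<forall>d\<ge>max 2 D.
      (\<forall>c \<in> sph d. \<forall>vreg. is_ssimplex d vreg \<and> is_regular d vreg \<and> circumscribed d vreg (sball d c r)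
         \<longrightarrow> (\<exists>v. is_ssimplex d v \<and> sball d c r \<subseteq> ssimplex_set d v \<and>
                  edge_length d v < edge_length d vreg))"
  proof (intro exI[of _ D] allI impI)
    fix d :: nat assume dD: "d \<ge> max 2 D"
    then have d3: "d \<ge> 3" unfolding D_def by simp
    have "real d \<ge> real (nat \<lceil>1 / (sin r)^2\<rceil>)" using dD unfolding D_def by simp
    moreover have "real (nat \<lceil>1 / (sin r)^2\<rceil>) \<ge> 1 / (sin r)^2" by (rule of_nat_ceiling)
    ultimately have "real d + 1 > 1 / (sin r)^2" by linarith
    then have big: "(real d + 1) * (sin r)^2 > 1" using sp by (simp add: divide_less_eq)
    show "\<forall>c \<in> sph d. \<forall>vreg. is_ssimplex d vreg \<and> is_regular d vreg \<and> circumscribed d vreg (sball d c r)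
         \<longrightarrow> (\<exists>v. is_ssimplex d v \<and> sball d c r \<subseteq> ssimplex_set d v \<and>
                  edge_length d v < edge_length d vreg)"
      using core[OF d3 _ _ big] r by blast
  qed
qed

end
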